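(* Let $f:E\to X$ be a fibrewise pointed map over $B$. Then $\mathrm{secat}^B_B(f)\le\mathrm{cat}^B_B(X)$. If moreover $E$ is fibrewise pointed contractible, then $\mathrm{secat}^B_B(f)=\mathrm{cat}^B_B(X)$.
   Context: Fibrewise pointed space over $B$: a space $X$ with a map $p_X:X\to B$ and a section $s_X$; fibrewise pointed map: $p_Yf=p_X$, $fs_X=s_Y$. A fibrewise pointed homotopy is a homotopy $H$ with $p_Y(H(x,t))=p_X(x)$ and $H(s_X(b),t)=s_Y(b)$ for all $b,t$ ($\simeq^B_B$). $E$ is fibrewise pointed contractible if it is fibrewise pointed homotopy equivalent to $B$ (with projection and section $\mathrm{id}_B$). $\mathrm{secat}^B_B(f)$: least $n$ such that $X$ is covered by $n+1$ open sets $U\supseteq s_X(B)$ each with a fibrewise pointed map $s:U\to E$ with $fs\simeq^B_B$ the inclusion $U\hookrightarrow X$. $\mathrm{cat}^B_B(X)$: least $n$ such that $X$ is covered by $n+1$ open sets $U_i\supseteq s_X(B)$ with inclusion $U_i\hookrightarrow X$ fibrewise pointed homotopic to $s_X\circ p_X|_{U_i}$. Both $\infty$ if no such $n$. *)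

theory Defs
  imports "HOL-Analysis.Analysis"
begin

definition fwp_space :: "'b topology \<Rightarrow> 'x topology \<Rightarrow> ('x \<Rightarrow> 'b) \<Rightarrow> ('b \<Rightarrow> 'x) \<Rightarrow> bool" where
  "fwp_space B X p s \<longleftrightarrow> continuous_map X B p \<and> continuous_map B X s \<and>
     (\<forall>b\<in>topspace B. p (s b) = b)"

definition fwp_map :: "'b topology \<Rightarrow> 'y topology \<Rightarrow> ('y \<Rightarrow> 'b) \<Rightarrow> ('b \<Rightarrow> 'y)
    \<Rightarrow> 'z topology \<Rightarrow> ('z \<Rightarrow> 'b) \<Rightarrow> ('b \<Rightarrow> 'z) \<Rightarrow> ('y \<Rightarrow> 'z) \<Rightarrow> bool" where
  "fwp_map B Y pY sY Z pZ sZ f \<longleftrightarrow> continuous_map Y Z f \<and>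
     (\<forall>y\<in>topspace Y. pZ (f y) = pY y) \<and> (\<forall>b\<in>topspace B. f (sY b) = sZ b)"

definition fwp_homotopic :: "'b topology \<Rightarrow> 'y topology \<Rightarrow> ('y \<Rightarrow> 'b) \<Rightarrow> ('b \<Rightarrow> 'y)
    \<Rightarrow> 'z topology \<Rightarrow> ('z \<Rightarrow> 'b) \<Rightarrow> ('b \<Rightarrow> 'z) \<Rightarrow> ('y \<Rightarrow> 'z) \<Rightarrow> ('y \<Rightarrow> 'z) \<Rightarrow> bool" where
  "fwp_homotopic B Y pY sY Z pZ sZ g h \<longleftrightarrow>
     (\<exists>H. continuous_map (prod_topology Y (top_of_set {0..1::real})) Z H \<and>
          (\<forall>y\<in>topspace Y. H (y, 0) = g y \<and> H (y, 1) = h y) \<and>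
          (\<forall>y\<in>topspace Y. \<forall>t\<in>{0..1}. pZ (H (y, t)) = pY y) \<and>
          (\<forall>b\<in>topspace B. \<forall>t\<in>{0..1}. H (sY b, t) = sZ b))"

definition fwp_contractible :: "'b topology \<Rightarrow> 'e topology \<Rightarrow> ('e \<Rightarrow> 'b) \<Rightarrow> ('b \<Rightarrow> 'e) \<Rightarrow> bool" where
  "fwp_contractible B E pE sE \<longleftrightarrow>
     (\<exists>g h. fwp_map B E pE sE B id id g \<and> fwp_map B B id id E pE sE h \<and>
        fwp_homotopic B B id id B id id (g \<circ> h) id \<and>
        fwp_homotopic B E pE sE E pE sE (h \<circ> g) id)"

text \<open>Fibrewise pointed sectional category of f : E \<rightarrow> X (value in enat, Inf {} = \<infinity>).
The open set U carries the subspace topology, projection pX and section sX.\<close>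

definition secatBB :: "'b topology \<Rightarrow> 'e topology \<Rightarrow> ('e \<Rightarrow> 'b) \<Rightarrow> ('b \<Rightarrow> 'e)
    \<Rightarrow> 'x topology \<Rightarrow> ('x \<Rightarrow> 'b) \<Rightarrow> ('b \<Rightarrow> 'x) \<Rightarrow> ('e \<Rightarrow> 'x) \<Rightarrow> enat" where
  "secatBB B E pE sE X pX sX f = Inf {enat n | n.
     \<exists>U :: nat \<Rightarrow> 'x set.
       topspace X \<subseteq> (\<Union>i\<le>n. U i) \<and>
       (\<forall>i\<le>n. openin X (U i) \<and> sX ` topspace B \<subseteq> U i \<and>
          (\<exists>\<sigma>. fwp_map B (subtopology X (U i)) pX sX E pE sE \<sigma> \<and>
               fwp_homotopic B (subtopology X (U i)) pX sX X pX sX (f \<circ> \<sigma>) id))}"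

definition catBB :: "'b topology \<Rightarrow> 'x topology \<Rightarrow> ('x \<Rightarrow> 'b) \<Rightarrow> ('b \<Rightarrow> 'x) \<Rightarrow> enat" where
  "catBB B X pX sX = Inf {enat n | n.
     \<exists>U :: nat \<Rightarrow> 'x set.
       topspace X \<subseteq> (\<Union>i\<le>n. U i) \<and>
       (\<forall>i\<le>n. openin X (U i) \<and> sX ` topspace B \<subseteq> U i \<and>
          fwp_homotopic B (subtopology X (U i)) pX sX X pX sX id (sX \<circ> pX))}"

end

theory Submission
  imports Defs
begin

definition fwpP where
  "fwpP B Y pY sY pZ sZ k \<longleftrightarrow> (\<forall>y\<in>topspace Y. pZ (k y) = pY y) \<and> (\<forall>b\<in>topspace B. k (sY b) = sZ b)"

lemma swap_cont: "continuous_map (prod_topology X Y) (prod_topology Y X) (\<lambda>(x,y). (y,x))"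
  using homeomorphic_imp_continuous_map homeomorphic_map_swap by blast

lemma fwp_imp_hw:
  fixes Y :: "'y topology" and Z :: "'z topology"
  assumes "fwp_homotopic B Y pY sY Z pZ sZ g h"
  shows "\<exists>H::'y\<times>real\<Rightarrow>'z. homotopic_with (fwpP B Y pY sY pZ sZ) Y Z (\<lambda>y. H (y,0)) (\<lambda>y. H (y,1)) \<and>
     (\<forall>y\<in>topspace Y. H (y, 0) = g y \<and> H (y, 1) = h y)"
proof -
  obtain H where H: "continuous_map (prod_topology Y (top_of_set {0..1::real})) Z H"
    "\<forall>y\<in>topspace Y. H (y, 0) = g y \<and> H (y, 1) = h y"
    "\<forall>y\<in>topspace Y. \<forall>t\<in>{0..1}. pZ (H (y, t)) = pY y"
    "\<forall>b\<in>topspace B. \<forall>t\<in>{0..1}. H (sY b, t) = sZ b"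
    using assms unfolding fwp_homotopic_def by blast
  have "continuous_map (prod_topology (top_of_set {0..1::real}) Y) Z (H \<circ> (\<lambda>(x,y). (y,x)))"
    using H(1) swap_cont continuous_map_compose by blast
  hence c: "continuous_map (prod_topology (top_of_set {0..1::real}) Y) Z (\<lambda>(t,y). H (y,t))"
    by (simp add: o_def case_prod_unfold)
  have "homotopic_with (fwpP B Y pY sY pZ sZ) Y Z (\<lambda>y. H (y,0)) (\<lambda>y. H (y,1))"
    unfolding homotopic_with_def
    apply (rule exI[where x="\<lambda>(t,y). H (y,t)"])
    using c H(3,4) by (auto simp: fwpP_def)
  thus ?thesis using H(2) by (intro exI[where x=H]) blast
qed

lemma hw_imp_fwp:
  assumes "homotopic_with (fwpP B Y pY sY pZ sZ) Y Z g h"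
  shows "fwp_homotopic B Y pY sY Z pZ sZ g h"
proof -
  obtain k where k: "continuous_map (prod_topology (top_of_set {0..1::real}) Y) Z k"
    "\<forall>x. k (0, x) = g x" "\<forall>x. k (1, x) = h x" "\<forall>t\<in>{0..1}. fwpP B Y pY sY pZ sZ (\<lambda>x. k (t, x))"
    using assms unfolding homotopic_with_def by blast
  have "continuous_map (prod_topology Y (top_of_set {0..1::real})) Z (k \<circ> (\<lambda>(x,y). (y,x)))"
    using k(1) swap_cont continuous_map_compose by blast
  hence c: "continuous_map (prod_topology Y (top_of_set {0..1::real})) Z (\<lambda>(y,t). k (t,y))"
    by (simp add: o_def case_prod_unfold)
  show ?thesis unfolding fwp_homotopic_def
    apply (rule exI[where x="\<lambda>(y,t). k (t,y)"])
    using c k(2,3,4) by (auto simp: fwpP_def)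
qed

lemma hw_eq:
  assumes "homotopic_with P X Y f g" "\<And>x. x \<in> topspace X \<Longrightarrow> f' x = f x"
    "\<And>x. x \<in> topspace X \<Longrightarrow> g' x = g x" "P f'" "P g'"
  shows "homotopic_with P X Y f' g'"
proof -
  have cf: "continuous_map X Y f" "continuous_map X Y g" "P f" "P g"
    using assms(1) homotopic_with_imp_continuous_maps homotopic_with_imp_property by blast+
  have "homotopic_with P X Y f' f"
    by (rule homotopic_with_equal) (use assms cf continuous_map_eq[of X Y f f'] in auto)
  moreover have "homotopic_with P X Y g g'"
    by (rule homotopic_with_equal) (use assms cf in auto)
  ultimately show ?thesis using assms(1) homotopic_with_trans by blast
qed

lemma fwp_trans:
  assumes "sY ` topspace B \<subseteq> topspace Y"
    "fwp_homotopic B Y pY sY Z pZ sZ f g" "fwp_homotopic B Y pY sY Z pZ sZ g h"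
  shows "fwp_homotopic B Y pY sY Z pZ sZ f h"
proof -
  obtain H1 where H1: "homotopic_with (fwpP B Y pY sY pZ sZ) Y Z (\<lambda>y. H1 (y,0::real)) (\<lambda>y. H1 (y,1))"
     "\<forall>y\<in>topspace Y. H1 (y, 0::real) = f y \<and> H1 (y, 1) = g y"
    using fwp_imp_hw[OF assms(2)] by blast
  obtain H2 where H2: "homotopic_with (fwpP B Y pY sY pZ sZ) Y Z (\<lambda>y. H2 (y,0::real)) (\<lambda>y. H2 (y,1))"
     "\<forall>y\<in>topspace Y. H2 (y, 0::real) = g y \<and> H2 (y, 1) = h y"
    using fwp_imp_hw[OF assms(3)] by blast
  have P2: "fwpP B Y pY sY pZ sZ (\<lambda>y. H2 (y,0::real))" "fwpP B Y pY sY pZ sZ (\<lambda>y. H2 (y,1))"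
    using H2(1) homotopic_with_imp_property by blast+
  have P1: "fwpP B Y pY sY pZ sZ (\<lambda>y. H1 (y,1))"
    using P2(1) H1(2) H2(2) assms(1) unfolding fwpP_def by (auto simp: image_subset_iff)
  have "homotopic_with (fwpP B Y pY sY pZ sZ) Y Z (\<lambda>y. H1 (y,1)) (\<lambda>y. H2 (y,1))"
    by (rule hw_eq[OF H2(1)]) (use H1(2) H2(2) P1 P2 in auto)
  hence "homotopic_with (fwpP B Y pY sY pZ sZ) Y Z (\<lambda>y. H1 (y,0::real)) (\<lambda>y. H2 (y,1))"
    using H1(1) homotopic_with_trans by blast
  hence "fwp_homotopic B Y pY sY Z pZ sZ (\<lambda>y. H1 (y,0::real)) (\<lambda>y. H2 (y,1))"
    by (rule hw_imp_fwp)
  thus ?thesis using H1(2) H2(2) unfolding fwp_homotopic_def by auto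
qed

lemma fwp_sym:
  assumes "fwp_homotopic B Y pY sY Z pZ sZ g h"
  shows "fwp_homotopic B Y pY sY Z pZ sZ h g"
proof -
  obtain H1 where H1: "homotopic_with (fwpP B Y pY sY pZ sZ) Y Z (\<lambda>y. H1 (y,0::real)) (\<lambda>y. H1 (y,1))"
     "\<forall>y\<in>topspace Y. H1 (y, 0::real) = g y \<and> H1 (y, 1) = h y"
    using fwp_imp_hw[OF assms] by blast
  have "fwp_homotopic B Y pY sY Z pZ sZ (\<lambda>y. H1 (y,1)) (\<lambda>y. H1 (y,0::real))"
    by (rule hw_imp_fwp) (use H1(1) homotopic_with_sym in blast)
  thus ?thesis using H1(2) unfolding fwp_homotopic_def by auto
qed

lemma fwp_cong:
  assumes "fwp_homotopic B Y pY sY Z pZ sZ g h"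
    "\<And>y. y \<in> topspace Y \<Longrightarrow> g' y = g y" "\<And>y. y \<in> topspace Y \<Longrightarrow> h' y = h y"
  shows "fwp_homotopic B Y pY sY Z pZ sZ g' h'"
  using assms unfolding fwp_homotopic_def by auto

lemma cat_sub_secat:
  assumes "fwp_space B E pE sE" and "fwp_space B X pX sX"
    and "fwp_map B E pE sE X pX sX f"
  shows "{enat n | n.
     \<exists>U :: nat \<Rightarrow> 'x set.
       topspace X \<subseteq> (\<Union>i\<le>n. U i) \<and>
       (\<forall>i\<le>n. openin X (U i) \<and> sX ` topspace B \<subseteq> U i \<and>
          fwp_homotopic B (subtopology X (U i)) pX sX X pX sX id (sX \<circ> pX))}
   \<subseteq> {enat n | n.
     \<exists>U :: nat \<Rightarrow> 'x set.
       topspace X \<subseteq> (\<Union>i\<le>n. U i) \<and>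
       (\<forall>i\<le>n. openin X (U i) \<and> sX ` topspace B \<subseteq> U i \<and>
          (\<exists>\<sigma>. fwp_map B (subtopology X (U i)) pX sX E pE sE \<sigma> \<and>
               fwp_homotopic B (subtopology X (U i)) pX sX X pX sX (f \<circ> \<sigma>) id))}"
proof -
  have cE: "continuous_map E B pE" "continuous_map B E sE" "\<And>b. b \<in> topspace B \<Longrightarrow> pE (sE b) = b"
    using assms(1) unfolding fwp_space_def by auto
  have cX: "continuous_map X B pX" "continuous_map B X sX" "\<And>b. b \<in> topspace B \<Longrightarrow> pX (sX b) = b"
    using assms(2) unfolding fwp_space_def by auto
  have cf: "continuous_map E X f" "\<And>e. e \<in> topspace E \<Longrightarrow> pX (f e) = pE e"
    "\<And>b. b \<in> topspace B \<Longrightarrow> f (sE b) = sX b"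
    using assms(3) unfolding fwp_map_def by auto
  have pXB: "\<And>x. x \<in> topspace X \<Longrightarrow> pX x \<in> topspace B"
    using continuous_map_image_subset_topspace[OF cX(1)] by blast
  show ?thesis
  proof (rule subsetI)
    fix m assume "m \<in> {enat n | n.
     \<exists>U :: nat \<Rightarrow> 'x set.
       topspace X \<subseteq> (\<Union>i\<le>n. U i) \<and>
       (\<forall>i\<le>n. openin X (U i) \<and> sX ` topspace B \<subseteq> U i \<and>
          fwp_homotopic B (subtopology X (U i)) pX sX X pX sX id (sX \<circ> pX))}"
    then obtain n U where m: "m = enat n" and U: "topspace X \<subseteq> (\<Union>i\<le>n. U i)"
      "\<And>i. i \<le> n \<Longrightarrow> openin X (U i) \<and> sX ` topspace B \<subseteq> U i \<and>
          fwp_homotopic B (subtopology X (U i)) pX sX X pX sX id (sX \<circ> pX)" by blast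
    have "\<forall>i\<le>n. openin X (U i) \<and> sX ` topspace B \<subseteq> U i \<and>
          (\<exists>\<sigma>. fwp_map B (subtopology X (U i)) pX sX E pE sE \<sigma> \<and>
               fwp_homotopic B (subtopology X (U i)) pX sX X pX sX (f \<circ> \<sigma>) id)"
    proof (intro allI impI conjI)
      fix i assume i: "i \<le> n"
      show "openin X (U i)" "sX ` topspace B \<subseteq> U i" using U(2)[OF i] by auto
      have "fwp_map B (subtopology X (U i)) pX sX E pE sE (sE \<circ> pX)"
        unfolding fwp_map_def
      proof (intro conjI ballI)
        show "continuous_map (subtopology X (U i)) E (sE \<circ> pX)"
          using cX(1) cE(2) continuous_map_compose continuous_map_from_subtopology by blast
        show "pE ((sE \<circ> pX) y) = pX y" if "y \<in> topspace (subtopology X (U i))" for y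
          using that pXB cE(3) by auto
        show "(sE \<circ> pX) (sX b) = sE b" if "b \<in> topspace B" for b
          using that cX(3) by auto
      qed
      moreover have "fwp_homotopic B (subtopology X (U i)) pX sX X pX sX (f \<circ> (sE \<circ> pX)) id"
        apply (rule fwp_cong[OF fwp_sym[OF conjunct2[OF conjunct2[OF U(2)[OF i]]]]])
        using pXB cf(3) by auto
      ultimately show "\<exists>\<sigma>. fwp_map B (subtopology X (U i)) pX sX E pE sE \<sigma> \<and>
               fwp_homotopic B (subtopology X (U i)) pX sX X pX sX (f \<circ> \<sigma>) id" by blast
    qed
    thus "m \<in> {enat n | n.
     \<exists>U :: nat \<Rightarrow> 'x set.
       topspace X \<subseteq> (\<Union>i\<le>n. U i) \<and>
       (\<forall>i\<le>n. openin X (U i) \<and> sX ` topspace B \<subseteq> U i \<and>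
          (\<exists>\<sigma>. fwp_map B (subtopology X (U i)) pX sX E pE sE \<sigma> \<and>
               fwp_homotopic B (subtopology X (U i)) pX sX X pX sX (f \<circ> \<sigma>) id))}"
      using m U(1) by blast
  qed
qed

lemma secat_sub_cat:
  assumes "fwp_space B E pE sE" and "fwp_space B X pX sX"
    and "fwp_map B E pE sE X pX sX f" and "fwp_contractible B E pE sE"
  shows "{enat n | n.
     \<exists>U :: nat \<Rightarrow> 'x set.
       topspace X \<subseteq> (\<Union>i\<le>n. U i) \<and>
       (\<forall>i\<le>n. openin X (U i) \<and> sX ` topspace B \<subseteq> U i \<and>
          (\<exists>\<sigma>. fwp_map B (subtopology X (U i)) pX sX E pE sE \<sigma> \<and>
               fwp_homotopic B (subtopology X (U i)) pX sX X pX sX (f \<circ> \<sigma>) id))}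
   \<subseteq> {enat n | n.
     \<exists>U :: nat \<Rightarrow> 'x set.
       topspace X \<subseteq> (\<Union>i\<le>n. U i) \<and>
       (\<forall>i\<le>n. openin X (U i) \<and> sX ` topspace B \<subseteq> U i \<and>
          fwp_homotopic B (subtopology X (U i)) pX sX X pX sX id (sX \<circ> pX))}"
proof -
  have cE: "continuous_map E B pE" "continuous_map B E sE" "\<And>b. b \<in> topspace B \<Longrightarrow> pE (sE b) = b"
    using assms(1) unfolding fwp_space_def by auto
  have cX: "continuous_map X B pX" "continuous_map B X sX" "\<And>b. b \<in> topspace B \<Longrightarrow> pX (sX b) = b"
    using assms(2) unfolding fwp_space_def by auto
  have cf: "continuous_map E X f" "\<And>e. e \<in> topspace E \<Longrightarrow> pX (f e) = pE e"
    "\<And>b. b \<in> topspace B \<Longrightarrow> f (sE b) = sX b"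
    using assms(3) unfolding fwp_map_def by auto
  have pXB: "\<And>x. x \<in> topspace X \<Longrightarrow> pX x \<in> topspace B"
    using continuous_map_image_subset_topspace[OF cX(1)] by blast
  have sXX: "\<And>b. b \<in> topspace B \<Longrightarrow> sX b \<in> topspace X"
    using continuous_map_image_subset_topspace[OF cX(2)] by blast
  obtain g h where gh: "fwp_map B E pE sE B id id g" "fwp_map B B id id E pE sE h"
        "fwp_homotopic B E pE sE E pE sE (h \<circ> g) id"
    using assms(4) unfolding fwp_contractible_def by blast
  have g: "\<And>e. e \<in> topspace E \<Longrightarrow> g e = pE e" using gh(1) unfolding fwp_map_def by auto
  have h: "\<And>b. b \<in> topspace B \<Longrightarrow> h b = sE b" using gh(2) unfolding fwp_map_def by auto
  obtain G where G: "continuous_map (prod_topology E (top_of_set {0..1::real})) E G"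
          "\<forall>y\<in>topspace E. G (y, 0) = (h \<circ> g) y \<and> G (y, 1) = id y"
          "\<forall>y\<in>topspace E. \<forall>t\<in>{0..1}. pE (G (y, t)) = pE y"
          "\<forall>b\<in>topspace B. \<forall>t\<in>{0..1}. G (sE b, t) = sE b"
    using gh(3) unfolding fwp_homotopic_def by blast
  show ?thesis
  proof (rule subsetI)
    fix m assume "m \<in> {enat n | n.
     \<exists>U :: nat \<Rightarrow> 'x set.
       topspace X \<subseteq> (\<Union>i\<le>n. U i) \<and>
       (\<forall>i\<le>n. openin X (U i) \<and> sX ` topspace B \<subseteq> U i \<and>
          (\<exists>\<sigma>. fwp_map B (subtopology X (U i)) pX sX E pE sE \<sigma> \<and>
               fwp_homotopic B (subtopology X (U i)) pX sX X pX sX (f \<circ> \<sigma>) id))}"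
    then obtain n U where m: "m = enat n" and U: "topspace X \<subseteq> (\<Union>i\<le>n. U i)"
      "\<And>i. i \<le> n \<Longrightarrow> openin X (U i) \<and> sX ` topspace B \<subseteq> U i \<and>
          (\<exists>\<sigma>. fwp_map B (subtopology X (U i)) pX sX E pE sE \<sigma> \<and>
               fwp_homotopic B (subtopology X (U i)) pX sX X pX sX (f \<circ> \<sigma>) id)" by blast
    have "\<forall>i\<le>n. openin X (U i) \<and> sX ` topspace B \<subseteq> U i \<and>
          fwp_homotopic B (subtopology X (U i)) pX sX X pX sX id (sX \<circ> pX)"
    proof (intro allI impI conjI)
      fix i assume i: "i \<le> n"
      show "openin X (U i)" and sU: "sX ` topspace B \<subseteq> U i" using U(2)[OF i] by auto
      obtain \<sigma> where \<sigma>: "fwp_map B (subtopology X (U i)) pX sX E pE sE \<sigma>"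
         "fwp_homotopic B (subtopology X (U i)) pX sX X pX sX (f \<circ> \<sigma>) id"
        using U(2)[OF i] by blast
      have c\<sigma>: "continuous_map (subtopology X (U i)) E \<sigma>"
        "\<And>y. y \<in> topspace (subtopology X (U i)) \<Longrightarrow> pE (\<sigma> y) = pX y"
        "\<And>b. b \<in> topspace B \<Longrightarrow> \<sigma> (sX b) = sE b"
        using \<sigma>(1) unfolding fwp_map_def by auto
      have \<sigma>E: "\<And>y. y \<in> topspace (subtopology X (U i)) \<Longrightarrow> \<sigma> y \<in> topspace E"
        using continuous_map_image_subset_topspace[OF c\<sigma>(1)] by blast
      have sUt: "sX ` topspace B \<subseteq> topspace (subtopology X (U i))"
        using sU sXX by auto
      let ?Y = "subtopology X (U i)"
      have cpair: "continuous_map (prod_topology ?Y (top_of_set {0..1::real}))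
            (prod_topology E (top_of_set {0..1::real})) (\<lambda>z. (\<sigma> (fst z), snd z))"
        by (intro continuous_map_pairedI continuous_map_compose[OF continuous_map_fst c\<sigma>(1), unfolded o_def]
             continuous_map_snd)
      have GE: "\<And>y t. y \<in> topspace E \<Longrightarrow> t \<in> {0..1} \<Longrightarrow> G (y,t) \<in> topspace E"
        by (rule subsetD[OF continuous_map_image_subset_topspace[OF G(1)] imageI]) simp
      have K: "fwp_homotopic B ?Y pX sX X pX sX (sX \<circ> pX) (f \<circ> \<sigma>)"
        unfolding fwp_homotopic_def
      proof (intro exI[where x="\<lambda>z. f (G (\<sigma> (fst z), snd z))"] conjI ballI)
        show "continuous_map (prod_topology ?Y (top_of_set {0..1::real})) X (\<lambda>z. f (G (\<sigma> (fst z), snd z)))"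
          using continuous_map_compose[OF continuous_map_compose[OF cpair G(1)] cf(1)]
          by (simp add: o_def)
        fix y assume y: "y \<in> topspace ?Y"
        have yX: "y \<in> topspace X" using y by auto
        show "f (G (\<sigma> (fst (y, 0::real)), snd (y, 0::real))) = (sX \<circ> pX) y"
          using G(2) \<sigma>E[OF y] g[OF \<sigma>E[OF y]] c\<sigma>(2)[OF y] h[OF pXB[OF yX]] cf(3)[OF pXB[OF yX]] by simp
        show "f (G (\<sigma> (fst (y, 1::real)), snd (y, 1::real))) = (f \<circ> \<sigma>) y"
          using G(2) \<sigma>E[OF y] by simp
        fix t :: real assume t: "t \<in> {0..1}"
        show "pX (f (G (\<sigma> (fst (y, t)), snd (y, t)))) = pX y"
          using cf(2)[OF GE[OF \<sigma>E[OF y] t]] G(3) \<sigma>E[OF y] t c\<sigma>(2)[OF y] by simp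
      next
        fix b t assume b: "b \<in> topspace B" and t: "(t::real) \<in> {0..1}"
        show "f (G (\<sigma> (fst (sX b, t)), snd (sX b, t))) = sX b"
          using c\<sigma>(3)[OF b] G(4) b t cf(3)[OF b] by simp
      qed
      have "fwp_homotopic B ?Y pX sX X pX sX (sX \<circ> pX) id"
        by (rule fwp_trans[OF sUt K \<sigma>(2)])
      thus "fwp_homotopic B ?Y pX sX X pX sX id (sX \<circ> pX)" by (rule fwp_sym)
    qed
    thus "m \<in> {enat n | n.
     \<exists>U :: nat \<Rightarrow> 'x set.
       topspace X \<subseteq> (\<Union>i\<le>n. U i) \<and>
       (\<forall>i\<le>n. openin X (U i) \<and> sX ` topspace B \<subseteq> U i \<and>
          fwp_homotopic B (subtopology X (U i)) pX sX X pX sX id (sX \<circ> pX))}"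
      using m U(1) by blast
  qed
qed

theorem proposition3p6:
  fixes B :: "'b topology" and E :: "'e topology" and X :: "'x topology"
    and pE :: "'e \<Rightarrow> 'b" and sE :: "'b \<Rightarrow> 'e"
    and pX :: "'x \<Rightarrow> 'b" and sX :: "'b \<Rightarrow> 'x" and f :: "'e \<Rightarrow> 'x"
  assumes "fwp_space B E pE sE" and "fwp_space B X pX sX"
    and "fwp_map B E pE sE X pX sX f"
  shows "secatBB B E pE sE X pX sX f \<le> catBB B X pX sX \<and>
    (fwp_contractible B E pE sE \<longrightarrow> secatBB B E pE sE X pX sX f = catBB B X pX sX)"
proof (intro conjI impI)
  show 1: "secatBB B E pE sE X pX sX f \<le> catBB B X pX sX"
    unfolding secatBB_def catBB_def by (rule Inf_superset_mono[OF cat_sub_secat[OF assms]])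
  assume c: "fwp_contractible B E pE sE"
  have "catBB B X pX sX \<le> secatBB B E pE sE X pX sX f"
    unfolding secatBB_def catBB_def by (rule Inf_superset_mono[OF secat_sub_cat[OF assms c]])
  with 1 show "secatBB B E pE sE X pX sX f = catBB B X pX sX" by (rule antisym)
qed

end
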